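(* Let $G$ be a topological group and $H$ a closed subgroup of finite index in $G$. Let $(\operatorname{Bohr}(G),\beta)$ be the Bohr compactification of $G$ and set $K=\overline{\beta(H)}$. Then: (i) $K$ is a subgroup of finite index in $\operatorname{Bohr}(G)$; (ii) $(K,\beta|_H)$ is a Bohr compactification of $H$; (iii) $K$ and $\operatorname{Bohr}(G)$ have the same connected component of the identity.
   Context: A Bohr compactification of a topological group $G$ is a pair $(\operatorname{Bohr}(G),\beta)$ with $\operatorname{Bohr}(G)$ compact and $\beta$ a continuous homomorphism with dense image such that every continuous homomorphism from $G$ to a compact group $L$ factors as $\alpha'\circ\beta$ with $\alpha':\operatorname{Bohr}(G)\to L$ continuous. *)

theory Defs
  imports "HOL-Analysis.Analysis" "HOL-Algebra.Group" "HOL-Algebra.Coset"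
begin

definition topological_group :: "('a, 'c) monoid_scheme \<Rightarrow> 'a topology \<Rightarrow> bool" where
  "topological_group G T \<longleftrightarrow>
     group G \<and> topspace T = carrier G \<and>
     continuous_map (prod_topology T T) T (\<lambda>p. fst p \<otimes>\<^bsub>G\<^esub> snd p) \<and>
     continuous_map T T (\<lambda>x. inv\<^bsub>G\<^esub> x)"

definition compact_group :: "('a, 'c) monoid_scheme \<Rightarrow> 'a topology \<Rightarrow> bool" where
  "compact_group G T \<longleftrightarrow> topological_group G T \<and> compact_space T \<and> Hausdorff_space T"

text \<open>(B, S, beta) is a Bohr compactification of the topological group (G, T), where the
  universal property is required for all compact target groups whose elements live in
  the type 'l (HOL cannot quantify over types inside a formula).\<close>
definition bohr_compactification_wrt ::
  "'l itself \<Rightarrow> ('a, 'c) monoid_scheme \<Rightarrow> 'a topology \<Rightarrow>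
   ('b, 'd) monoid_scheme \<Rightarrow> 'b topology \<Rightarrow> ('a \<Rightarrow> 'b) \<Rightarrow> bool" where
  "bohr_compactification_wrt _ G T B S beta \<longleftrightarrow>
     compact_group B S \<and> beta \<in> hom G B \<and> continuous_map T S beta \<and>
     S closure_of (beta ` carrier G) = topspace S \<and>
     (\<forall>(L :: 'l monoid) U alpha.
        compact_group L U \<and> alpha \<in> hom G L \<and> continuous_map T U alpha \<longrightarrow>
        (\<exists>alpha'. alpha' \<in> hom B L \<and> continuous_map S U alpha' \<and>
                  (\<forall>x \<in> carrier G. alpha x = alpha' (beta x))))"

end

theory Submission
  imports Defs
begin
lemma tg_group: "topological_group G T \<Longrightarrow> group G"
  by (simp add: topological_group_def)

lemma tg_topspace: "topological_group G T \<Longrightarrow> topspace T = carrier G"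
  by (simp add: topological_group_def)

lemma tg_mult_cont:
  assumes "topological_group G T" "continuous_map X T f" "continuous_map X T g"
  shows "continuous_map X T (\<lambda>x. f x \<otimes>\<^bsub>G\<^esub> g x)"
proof -
  have m: "continuous_map (prod_topology T T) T (\<lambda>p. fst p \<otimes>\<^bsub>G\<^esub> snd p)"
    using assms(1) by (simp add: topological_group_def)
  have "continuous_map X (prod_topology T T) (\<lambda>x. (f x, g x))"
    using assms by (intro continuous_map_pairedI)
  from continuous_map_compose[OF this m] show ?thesis by (simp add: o_def)
qed

lemma tg_inv_cont:
  assumes "topological_group G T" "continuous_map X T f"
  shows "continuous_map X T (\<lambda>x. inv\<^bsub>G\<^esub> f x)"
proof -
  have m: "continuous_map T T (\<lambda>x. inv\<^bsub>G\<^esub> x)"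
    using assms(1) by (simp add: topological_group_def)
  from continuous_map_compose[OF assms(2) m] show ?thesis by (simp add: o_def)
qed

lemma tg_const_cont:
  assumes "topological_group G T" "a \<in> carrier G"
  shows "continuous_map X T (\<lambda>x. a)"
  using assms by (simp add: tg_topspace)

lemma tg_right_coset_closed:
  fixes G (structure)
  assumes TG: "topological_group G T" and "closedin T A" and a: "a \<in> carrier G"
  shows "closedin T (A #>\<^bsub>G\<^esub> a)"
proof -
  interpret group G using tg_group[OF TG] .
  have A: "A \<subseteq> carrier G" using assms closedin_subset tg_topspace by metis
  have c: "continuous_map T T (\<lambda>x. x \<otimes> inv a)"
    by (intro tg_mult_cont[OF TG] continuous_map_id[unfolded id_def] tg_const_cont[OF TG]) (use a in auto)
  have eq: "A #> a = {x \<in> topspace T. x \<otimes> inv a \<in> A}"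
  proof safe
    fix x assume "x \<in> A #> a"
    then obtain h where h: "h \<in> A" "x = h \<otimes> a" by (auto simp: r_coset_def)
    then show "x \<in> topspace T" using A a by (auto simp: tg_topspace[OF TG])
    show "x \<otimes> inv a \<in> A" using h A a by (simp add: m_assoc subsetD)
  next
    fix x assume x: "x \<in> topspace T" "x \<otimes> inv a \<in> A"
    then have "x = (x \<otimes> inv a) \<otimes> a" using a by (simp add: m_assoc tg_topspace[OF TG])
    then show "x \<in> A #> a" using x by (auto simp: r_coset_def)
  qed
  show ?thesis unfolding eq by (rule closedin_continuous_map_preimage[OF c assms(2)])
qed

lemma tg_finite_index_open:
  fixes G (structure)
  assumes TG: "topological_group G T" and H: "subgroup H G" "closedin T H"
    and fin: "finite (rcosets\<^bsub>G\<^esub> H)"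
  shows "openin T H"
proof -
  interpret group G using tg_group[OF TG] .
  have "closedin T (\<Union>(rcosets H - {H}))"
  proof (rule closedin_Union)
    show "finite (rcosets H - {H})" using fin by simp
    fix C assume "C \<in> rcosets H - {H}"
    then obtain a where "a \<in> carrier G" "C = H #> a" by (auto simp: RCOSETS_def)
    then show "closedin T C" using tg_right_coset_closed[OF TG H(2)] by simp
  qed
  moreover have "\<Union>(rcosets H - {H}) = topspace T - H"
  proof -
    have Hs: "H \<subseteq> carrier G" by (rule subgroup.subset[OF H(1)])
    have "H #> \<one> \<in> rcosets H" by (rule rcosetsI[OF Hs one_closed])
    then have HR: "H \<in> rcosets H" using Hs by simp
    have U: "\<Union>(rcosets H) = carrier G" using rcosets_part_G[OF H(1)] .
    have D: "C \<inter> H = {}" if "C \<in> rcosets H" "C \<noteq> H" for C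
      using rcos_disjoint[OF H(1)] that HR unfolding pairwise_def disjnt_def by blast
    show ?thesis
    proof
      show "\<Union>(rcosets H - {H}) \<subseteq> topspace T - H"
        using U D tg_topspace[OF TG] by blast
      show "topspace T - H \<subseteq> \<Union>(rcosets H - {H})"
        using U tg_topspace[OF TG] by blast
    qed
  qed
  ultimately have "closedin T (topspace T - H)" by simp
  then show ?thesis using closedin_subset[OF H(2)]
    by (simp add: openin_closedin_eq)
qed

lemma tg_closure_subgroup:
  fixes G (structure)
  assumes TG: "topological_group G T" and H: "subgroup H G"
  shows "subgroup (T closure_of H) G"
proof -
  interpret group G using tg_group[OF TG] .
  let ?K = "T closure_of H"
  have m: "continuous_map (prod_topology T T) T (\<lambda>p. fst p \<otimes> snd p)"
    and i: "continuous_map T T (\<lambda>x. inv x)"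
    using TG by (auto simp: topological_group_def)
  have sub: "?K \<subseteq> carrier G" using closure_of_subset_topspace tg_topspace[OF TG] by metis
  show ?thesis
  proof
    show "?K \<subseteq> carrier G" by (fact sub)
    show "\<one> \<in> ?K"
      using closure_of_subset[of H T] subgroup.one_closed[OF H] subgroup.subset[OF H] tg_topspace[OF TG] by auto
  next
    fix x y assume xy: "x \<in> ?K" "y \<in> ?K"
    have "(\<lambda>p. fst p \<otimes> snd p) ` (prod_topology T T closure_of (H \<times> H)) \<subseteq> T closure_of ((\<lambda>p. fst p \<otimes> snd p) ` (H \<times> H))"
      by (rule continuous_map_image_closure_subset[OF m])
    moreover have "(\<lambda>p. fst p \<otimes> snd p) ` (H \<times> H) \<subseteq> H" using subgroup.m_closed[OF H] by auto
    then have "T closure_of ((\<lambda>p. fst p \<otimes> snd p) ` (H \<times> H)) \<subseteq> ?K"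
      by (rule closure_of_mono)
    ultimately have "(\<lambda>p. fst p \<otimes> snd p) ` (?K \<times> ?K) \<subseteq> ?K"
      unfolding closure_of_Times by (rule order_trans)
    then have "(\<lambda>p. fst p \<otimes> snd p) (x, y) \<in> ?K" using xy by blast
    then show "x \<otimes> y \<in> ?K" by simp
  next
    fix x assume x: "x \<in> ?K"
    have "(\<lambda>x. inv x) ` ?K \<subseteq> T closure_of ((\<lambda>x. inv x) ` H)"
      by (rule continuous_map_image_closure_subset[OF i])
    moreover have "(\<lambda>x. inv x) ` H \<subseteq> H" using subgroup.m_inv_closed[OF H] by auto
    then have "T closure_of ((\<lambda>x. inv x) ` H) \<subseteq> ?K"
      by (rule closure_of_mono)
    ultimately have "(\<lambda>x. inv x) ` ?K \<subseteq> ?K" by (rule order_trans)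
    then show "inv x \<in> ?K" using x by auto
  qed
qed

lemma tg_subgroup:
  fixes G (structure)
  assumes TG: "topological_group G T" and H: "subgroup H G"
  shows "topological_group (G\<lparr>carrier := H\<rparr>) (subtopology T H)"
proof -
  interpret group G using tg_group[OF TG] .
  have m: "continuous_map (prod_topology T T) T (\<lambda>p. fst p \<otimes> snd p)"
    and i: "continuous_map T T (\<lambda>x. inv x)"
    using TG by (auto simp: topological_group_def)
  have Hs: "H \<subseteq> carrier G" using subgroup.subset[OF H] .
  have inv_eq: "inv\<^bsub>G\<lparr>carrier := H\<rparr>\<^esub> x = inv x" if "x \<in> H" for x
    using m_inv_consistent[OF H that] .
  show ?thesis unfolding topological_group_def
  proof (intro conjI)
    show "group (G\<lparr>carrier := H\<rparr>)" using subgroup_imp_group[OF H] .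
    show "topspace (subtopology T H) = carrier (G\<lparr>carrier := H\<rparr>)"
      using Hs tg_topspace[OF TG] by auto
    have "continuous_map (prod_topology (subtopology T H) (subtopology T H)) (subtopology T H) (\<lambda>p. fst p \<otimes> snd p)"
      unfolding continuous_map_in_subtopology
      using continuous_map_from_subtopology[OF m, of "H \<times> H"] subgroup.m_closed[OF H]
      by (auto simp: subtopology_Times)
    then show "continuous_map (prod_topology (subtopology T H) (subtopology T H)) (subtopology T H)
       (\<lambda>p. fst p \<otimes>\<^bsub>G\<lparr>carrier := H\<rparr>\<^esub> snd p)" by simp
    have "continuous_map (subtopology T H) (subtopology T H) (\<lambda>x. inv x)"
      unfolding continuous_map_in_subtopology
      using continuous_map_from_subtopology[OF i, of H] subgroup.m_inv_closed[OF H] by auto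
    then show "continuous_map (subtopology T H) (subtopology T H) (\<lambda>x. inv\<^bsub>G\<lparr>carrier := H\<rparr>\<^esub> x)"
      by (rule continuous_map_eq) (simp add: inv_eq)
  qed
qed

lemma cg_closed_subgroup:
  assumes CG: "compact_group G T" and H: "subgroup H G" "closedin T H"
  shows "compact_group (G\<lparr>carrier := H\<rparr>) (subtopology T H)"
proof -
  have "topological_group (G\<lparr>carrier := H\<rparr>) (subtopology T H)"
    using assms tg_subgroup[of G T H] unfolding compact_group_def by blast
  moreover have "compact_space (subtopology T H)"
    using assms unfolding compact_group_def
    by (intro compact_space_subtopology closedin_compact_space) auto
  moreover have "Hausdorff_space (subtopology T H)"
    using assms unfolding compact_group_def by (intro Hausdorff_space_subtopology) auto
  ultimately show ?thesis unfolding compact_group_def by blast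
qed

lemma dense_inj:
  assumes HX: "Hausdorff_space X"
  shows "inj_on (\<lambda>x. {{a \<in> A. f a \<in> V} | V. openin X V \<and> x \<in> V}) (X closure_of (f ` A))"
proof (rule inj_onI)
  define N where "N x = {{a \<in> A. f a \<in> V} | V. openin X V \<and> x \<in> V}" for x
  have N_iff: "Z \<in> N x \<longleftrightarrow> (\<exists>V. Z = {a \<in> A. f a \<in> V} \<and> openin X V \<and> x \<in> V)" for Z x
    by (simp add: N_def)
  fix x y assume x: "x \<in> X closure_of (f ` A)" and y: "y \<in> X closure_of (f ` A)"
    and eq0: "{{a \<in> A. f a \<in> V} | V. openin X V \<and> x \<in> V} = {{a \<in> A. f a \<in> V} | V. openin X V \<and> y \<in> V}"
  have eq: "N x = N y" using eq0 by (simp add: N_def)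
  show "x = y"
  proof (rule ccontr)
    assume "x \<noteq> y"
    moreover have "x \<in> topspace X" "y \<in> topspace X"
      using closure_of_subset_topspace[of X "f ` A"] x y by auto
    ultimately have "\<exists>U W. openin X U \<and> openin X W \<and> x \<in> U \<and> y \<in> W \<and> disjnt U W"
      using HX unfolding Hausdorff_space_def by simp
    then obtain U W where UW: "openin X U" "openin X W" "x \<in> U" "y \<in> W" "disjnt U W"
      by blast
    have m1: "{a \<in> A. f a \<in> U} \<in> N x" unfolding N_iff
      by (rule exI[of _ U]) (simp add: UW(1,3))
    then have m2: "{a \<in> A. f a \<in> U} \<in> N y" by (simp add: eq)
    then obtain V where V: "{a \<in> A. f a \<in> U} = {a \<in> A. f a \<in> V}" "openin X V" "y \<in> V"
      unfolding N_iff by (elim exE conjE) (rule that, assumption+)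
    have oVW: "openin X (V \<inter> W)" using V(2) UW(2) by (rule openin_Int)
    have yVW: "y \<in> V \<inter> W" using V(3) UW(4) by (rule IntI)
    have CL: "\<forall>T. y \<in> T \<and> openin X T \<longrightarrow> (\<exists>z. z \<in> f ` A \<and> z \<in> T)"
      using y unfolding in_closure_of by (elim conjE)
    have "\<exists>z. z \<in> f ` A \<and> z \<in> V \<inter> W" by (rule CL[rule_format, OF conjI[OF yVW oVW]])
    then obtain z where z: "z \<in> f ` A" "z \<in> V \<inter> W" by (elim exE conjE) (rule that)
    then obtain a where a: "a \<in> A" "z = f a" by (elim imageE) (rule that)
    have faV: "f a \<in> V \<inter> W" using z(2) a(2) by simp
    then have aV: "a \<in> {a \<in> A. f a \<in> V}" using a(1) by simp
    have "a \<in> {a \<in> A. f a \<in> U}" by (subst V(1)) (fact aV)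
    then have "f a \<in> U" by simp
    then show False using faV UW(5) unfolding disjnt_def by blast
  qed
qed
lemma cont_paste:
  assumes op: "\<And>d. openin X {x \<in> topspace X. k x = d}"
    and ct: "\<And>d. continuous_map (subtopology X {x \<in> topspace X. k x = d}) Y (F d)"
  shows "continuous_map X Y (\<lambda>x. F (k x) x)"
  unfolding continuous_map_def
proof (intro conjI allI impI)
  show "(\<lambda>x. F (k x) x) \<in> topspace X \<rightarrow> topspace Y"
  proof
    fix x assume "x \<in> topspace X"
    then have "x \<in> topspace (subtopology X {y \<in> topspace X. k y = k x})" by simp
    then show "F (k x) x \<in> topspace Y" by (rule funcset_mem[OF continuous_map_funspace[OF ct[of "k x"]]])
  qed
  fix V assume V: "openin Y V"
  define P where "P d = {x \<in> topspace (subtopology X {x \<in> topspace X. k x = d}). F d x \<in> V}" for d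
  have "{x \<in> topspace X. F (k x) x \<in> V} = \<Union>(range P)"
    unfolding P_def by auto
  moreover have "openin X (\<Union>(range P))"
  proof (rule openin_Union)
    fix S assume "S \<in> range P"
    then obtain d where d: "S = P d" by (elim rangeE)
    have "openin (subtopology X {x \<in> topspace X. k x = d}) (P d)"
      unfolding P_def by (rule openin_continuous_map_preimage[OF ct[of d] V])
    then show "openin X S" unfolding d using op[of d] by (rule openin_trans_full)
  qed
  ultimately show "openin X {x \<in> topspace X. F (k x) x \<in> V}" by simp
qed

lemma discrete_fibre_eq:
  assumes "continuous_map X (discrete_topology D) k"
  shows "{x \<in> topspace X. k x \<in> {d} \<inter> D} = {x \<in> topspace X. k x = d}"
proof -
  have kD: "k x \<in> D" if "x \<in> topspace X" for x
    using continuous_map_funspace[OF assms] that by (simp add: Pi_iff)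
  show ?thesis by (intro Collect_cong) (use kD in blast)
qed

lemma discrete_fibre_open:
  assumes "continuous_map X (discrete_topology D) k"
  shows "openin X {x \<in> topspace X. k x = d}"
proof -
  have "openin X {x \<in> topspace X. k x \<in> {d} \<inter> D}"
    by (rule openin_continuous_map_preimage[OF assms]) simp
  then show ?thesis by (simp only: discrete_fibre_eq[OF assms])
qed

lemma discrete_fibre_closed:
  assumes "continuous_map X (discrete_topology D) k"
  shows "closedin X {x \<in> topspace X. k x = d}"
proof -
  have "closedin X {x \<in> topspace X. k x \<in> {d} \<inter> D}"
    by (rule closedin_continuous_map_preimage[OF assms]) simp
  then show ?thesis by (simp only: discrete_fibre_eq[OF assms])
qed
definition tr_mon :: "('x \<Rightarrow> 'y) \<Rightarrow> ('x, 'z) monoid_scheme \<Rightarrow> 'y monoid" where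
  "tr_mon e L = \<lparr>carrier = e ` carrier L,
     mult = (\<lambda>a b. e (inv_into (carrier L) e a \<otimes>\<^bsub>L\<^esub> inv_into (carrier L) e b)),
     one = e \<one>\<^bsub>L\<^esub>\<rparr>"

lemma tr_mon_carrier: "carrier (tr_mon e L) = e ` carrier L"
  by (simp add: tr_mon_def)
lemma tr_mon_mult: "x \<otimes>\<^bsub>tr_mon e L\<^esub> y = e (inv_into (carrier L) e x \<otimes>\<^bsub>L\<^esub> inv_into (carrier L) e y)"
  by (simp add: tr_mon_def)
lemma tr_mon_one: "\<one>\<^bsub>tr_mon e L\<^esub> = e \<one>\<^bsub>L\<^esub>"
  by (simp add: tr_mon_def)

definition tr_top :: "('x \<Rightarrow> 'y) \<Rightarrow> ('x, 'z) monoid_scheme \<Rightarrow> 'x topology \<Rightarrow> 'y topology" where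
  "tr_top e L U = pullback_topology (e ` carrier L) (inv_into (carrier L) e) U"

lemma transport:
  fixes L :: "('x, 'z) monoid_scheme" and e :: "'x \<Rightarrow> 'y"
  assumes CG: "compact_group L U" and inj: "inj_on e (carrier L)"
  shows "compact_group (tr_mon e L) (tr_top e L U)"
    and "e \<in> hom L (tr_mon e L)" and "inv_into (carrier L) e \<in> hom (tr_mon e L) L"
    and "continuous_map U (tr_top e L U) e"
    and "continuous_map (tr_top e L U) U (inv_into (carrier L) e)"
proof -
  let ?d = "inv_into (carrier L) e"
  let ?Lt = "tr_mon e L" and ?Ut = "tr_top e L U"
  have TG: "topological_group L U" using CG by (simp add: compact_group_def)
  interpret L: group L using tg_group[OF TG] .
  have tsU: "topspace U = carrier L" using tg_topspace[OF TG] .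
  have de: "?d (e x) = x" if "x \<in> carrier L" for x using inv_into_f_f[OF inj that] .
  have dc: "?d a \<in> carrier L" if "a \<in> e ` carrier L" for a using that by (auto simp: de)
  have ed: "e (?d a) = a" if "a \<in> e ` carrier L" for a using that by (auto simp: de)
  show eh: "e \<in> hom L ?Lt"
    by (rule homI) (auto simp: tr_mon_def de)
  have gLt: "group ?Lt"
  proof -
    have "group (?Lt\<lparr>carrier := e ` carrier L, one := e \<one>\<^bsub>L\<^esub>\<rparr>)"
      using L.hom_imp_img_group[OF eh] .
    moreover have "?Lt\<lparr>carrier := e ` carrier L, one := e \<one>\<^bsub>L\<^esub>\<rparr> = ?Lt"
      by (simp add: tr_mon_def)
    ultimately show ?thesis by simp
  qed
  interpret Lt: group ?Lt by (fact gLt)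
  have GH: "group_hom L ?Lt e" by (intro group_hom.intro group_hom_axioms.intro) (fact L.group_axioms, fact gLt, fact eh)
  show dh: "?d \<in> hom ?Lt L"
  proof (rule homI)
    fix a assume "a \<in> carrier ?Lt"
    then have a: "a \<in> e ` carrier L" by (simp only: tr_mon_carrier tr_mon_mult)
    show "?d a \<in> carrier L" by (rule dc[OF a])
  next
    fix a b assume "a \<in> carrier ?Lt" "b \<in> carrier ?Lt"
    then have a: "a \<in> e ` carrier L" and b: "b \<in> e ` carrier L" by (simp_all only: tr_mon_carrier tr_mon_mult)
    have "?d (a \<otimes>\<^bsub>?Lt\<^esub> b) = ?d (e (?d a \<otimes>\<^bsub>L\<^esub> ?d b))" by (simp only: tr_mon_carrier tr_mon_mult)
    also have "\<dots> = ?d a \<otimes>\<^bsub>L\<^esub> ?d b" by (rule de) (intro L.m_closed dc a b)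
    finally show "?d (a \<otimes>\<^bsub>?Lt\<^esub> b) = ?d a \<otimes>\<^bsub>L\<^esub> ?d b" .
  qed
  have tsUt: "topspace ?Ut = e ` carrier L"
    unfolding tr_top_def topspace_pullback_topology tsU
  proof (rule subset_antisym)
    show "?d -` carrier L \<inter> e ` carrier L \<subseteq> e ` carrier L" by (rule Int_lower2)
    show "e ` carrier L \<subseteq> ?d -` carrier L \<inter> e ` carrier L"
    proof
      fix a assume a: "a \<in> e ` carrier L"
      show "a \<in> ?d -` carrier L \<inter> e ` carrier L" using dc[OF a] a by simp
    qed
  qed
  show dcont: "continuous_map ?Ut U ?d"
    using continuous_map_pullback[OF continuous_map_id, of "e ` carrier L" ?d U]
    by (simp add: tr_top_def)
  show econt: "continuous_map U ?Ut e"
    unfolding tr_top_def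
  proof (rule continuous_map_pullback')
    show "continuous_map U U (?d \<circ> e)"
      by (rule continuous_map_eq[OF continuous_map_id]) (simp add: tsU de)
    show "topspace U \<subseteq> e -` (e ` carrier L)"
    proof
      fix x assume "x \<in> topspace U"
      then have "e x \<in> e ` carrier L" unfolding tsU by (rule imageI)
      then show "x \<in> e -` (e ` carrier L)" by simp
    qed
  qed
  have hm: "homeomorphic_maps U ?Ut e ?d"
    unfolding homeomorphic_maps_def
  proof (intro conjI ballI)
    show "continuous_map U ?Ut e" by (fact econt)
    show "continuous_map ?Ut U ?d" by (fact dcont)
    fix x assume "x \<in> topspace U" then show "?d (e x) = x" unfolding tsU by (rule de)
  next
    fix y assume "y \<in> topspace ?Ut" then show "e (?d y) = y" unfolding tsUt by (rule ed)
  qed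
  then have hs: "U homeomorphic_space ?Ut" unfolding homeomorphic_space_def by (intro exI)
  have mult_eq: "x \<otimes>\<^bsub>?Lt\<^esub> y = e (?d x \<otimes>\<^bsub>L\<^esub> ?d y)" for x y by (simp only: tr_mon_carrier tr_mon_mult)
  have inv_eq: "inv\<^bsub>?Lt\<^esub> a = e (inv\<^bsub>L\<^esub> (?d a))" if a: "a \<in> e ` carrier L" for a
  proof -
    obtain x where x: "x \<in> carrier L" "a = e x" using a by (elim imageE) (rule that)
    have "inv\<^bsub>?Lt\<^esub> a = e (inv\<^bsub>L\<^esub> x)" unfolding x(2) by (rule group_hom.hom_inv[OF GH x(1), symmetric])
    also have "x = ?d a" unfolding x(2) by (rule de[OF x(1), symmetric])
    finally show ?thesis .
  qed
  have mc: "continuous_map (prod_topology ?Ut ?Ut) ?Ut (\<lambda>p. fst p \<otimes>\<^bsub>?Lt\<^esub> snd p)"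
  proof -
    have "continuous_map (prod_topology ?Ut ?Ut) U (\<lambda>p. ?d (fst p) \<otimes>\<^bsub>L\<^esub> ?d (snd p))"
      by (intro tg_mult_cont[OF TG] continuous_map_compose[OF continuous_map_fst dcont, unfolded o_def] continuous_map_compose[OF continuous_map_snd dcont, unfolded o_def])
    from continuous_map_compose[OF this econt] show ?thesis by (simp add: o_def mult_eq)
  qed
  have ic: "continuous_map ?Ut ?Ut (\<lambda>a. inv\<^bsub>?Lt\<^esub> a)"
  proof -
    have "continuous_map ?Ut U (\<lambda>a. inv\<^bsub>L\<^esub> (?d a))" by (rule tg_inv_cont[OF TG dcont])
    from continuous_map_compose[OF this econt]
    have "continuous_map ?Ut ?Ut (\<lambda>a. e (inv\<^bsub>L\<^esub> (?d a)))" by (simp add: o_def)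
    then show ?thesis by (rule continuous_map_eq) (simp add: tsUt inv_eq)
  qed
  have cU: "compact_space U" and hU: "Hausdorff_space U" using CG by (simp_all add: compact_group_def)
  show "compact_group ?Lt ?Ut"
    unfolding compact_group_def topological_group_def
  proof (intro conjI)
    show "group ?Lt" by (fact gLt)
    show "topspace ?Ut = carrier ?Lt" by (simp only: tsUt tr_mon_carrier)
    show "continuous_map (prod_topology ?Ut ?Ut) ?Ut (\<lambda>p. fst p \<otimes>\<^bsub>?Lt\<^esub> snd p)" by (fact mc)
    show "continuous_map ?Ut ?Ut (\<lambda>a. inv\<^bsub>?Lt\<^esub> a)" by (fact ic)
    show "compact_space ?Ut" using homeomorphic_compact_space[OF hs] cU by simp
    show "Hausdorff_space ?Ut" using homeomorphic_Hausdorff_space[OF hs] hU by simp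
  qed
qed

definition perms :: "'r set \<Rightarrow> ('r \<Rightarrow> 'r) set" where
  "perms R = {s \<in> R \<rightarrow>\<^sub>E R. bij_betw s R R}"

definition wr :: "'r set \<Rightarrow> ('l, 'z) monoid_scheme \<Rightarrow> (('r \<Rightarrow> 'r) \<times> ('r \<Rightarrow> 'l)) monoid" where
  "wr R L = \<lparr>carrier = perms R \<times> (R \<rightarrow>\<^sub>E carrier L),
     mult = (\<lambda>x y. (restrict (fst x \<circ> fst y) R, restrict (\<lambda>C. snd x (fst y C) \<otimes>\<^bsub>L\<^esub> snd y C) R)),
     one = (restrict id R, restrict (\<lambda>C. \<one>\<^bsub>L\<^esub>) R)\<rparr>"

lemma wr_carrier: "carrier (wr R L) = perms R \<times> (R \<rightarrow>\<^sub>E carrier L)"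
  by (simp add: wr_def)
lemma wr_mult: "x \<otimes>\<^bsub>wr R L\<^esub> y = (restrict (fst x \<circ> fst y) R, restrict (\<lambda>C. snd x (fst y C) \<otimes>\<^bsub>L\<^esub> snd y C) R)"
  by (simp add: wr_def)
lemma wr_one: "\<one>\<^bsub>wr R L\<^esub> = (restrict id R, restrict (\<lambda>C. \<one>\<^bsub>L\<^esub>) R)"
  by (simp add: wr_def)

lemma perms_mem: "s \<in> perms R \<Longrightarrow> C \<in> R \<Longrightarrow> s C \<in> R"
  by (auto simp: perms_def)
lemma perms_ext: "s \<in> perms R \<Longrightarrow> s \<in> extensional R"
  by (auto simp: perms_def PiE_def)
lemma perms_bij: "s \<in> perms R \<Longrightarrow> bij_betw s R R"
  by (simp add: perms_def)

lemma perms_comp: assumes "s \<in> perms R" "t \<in> perms R" shows "restrict (s \<circ> t) R \<in> perms R"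
proof -
  have "bij_betw (s \<circ> t) R R" using bij_betw_trans[OF perms_bij[OF assms(2)] perms_bij[OF assms(1)]] .
  then have "bij_betw (restrict (s \<circ> t) R) R R" by (rule bij_betw_cong[THEN iffD1, rotated]) simp
  moreover have "restrict (s \<circ> t) R \<in> R \<rightarrow>\<^sub>E R" using perms_mem[OF assms(1)] perms_mem[OF assms(2)] by simp
  ultimately show ?thesis by (simp add: perms_def)
qed

lemma perms_id: "restrict id R \<in> perms R"
proof -
  have "bij_betw (restrict id R) R R" by (rule bij_betw_cong[THEN iffD1, rotated, OF bij_betw_id]) simp
  then show ?thesis by (simp add: perms_def)
qed

lemma perms_inv: assumes "s \<in> perms R" shows "restrict (inv_into R s) R \<in> perms R"
proof -
  have b: "bij_betw (inv_into R s) R R" by (rule bij_betw_inv_into[OF perms_bij[OF assms]])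
  then have "bij_betw (restrict (inv_into R s) R) R R" by (rule bij_betw_cong[THEN iffD1, rotated]) simp
  moreover have "restrict (inv_into R s) R \<in> R \<rightarrow>\<^sub>E R" using bij_betwE[OF b] by simp
  ultimately show ?thesis by (simp add: perms_def)
qed

lemma wr_group:
  assumes gL: "group L"
  shows "group (wr R L)"
proof -
  interpret L: group L by (fact gL)
  have fm: "f C \<in> carrier L" if "f \<in> R \<rightarrow>\<^sub>E carrier L" "C \<in> R" for f C
    using that by auto
  show ?thesis
  proof (rule groupI)
    fix x y assume x: "x \<in> carrier (wr R L)" and y: "y \<in> carrier (wr R L)"
    have x1: "fst x \<in> perms R" and x2: "snd x \<in> R \<rightarrow>\<^sub>E carrier L"
      and y1: "fst y \<in> perms R" and y2: "snd y \<in> R \<rightarrow>\<^sub>E carrier L"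
      using x y by (auto simp: wr_carrier)
    have "restrict (\<lambda>C. snd x (fst y C) \<otimes>\<^bsub>L\<^esub> snd y C) R \<in> R \<rightarrow>\<^sub>E carrier L"
      using fm[OF x2 perms_mem[OF y1]] fm[OF y2] by simp
    then show "x \<otimes>\<^bsub>wr R L\<^esub> y \<in> carrier (wr R L)"
      unfolding wr_mult wr_carrier using perms_comp[OF x1 y1] by simp
  next
    show "\<one>\<^bsub>wr R L\<^esub> \<in> carrier (wr R L)"
      unfolding wr_one wr_carrier using perms_id by simp
  next
    fix x y z assume x: "x \<in> carrier (wr R L)" and y: "y \<in> carrier (wr R L)" and z: "z \<in> carrier (wr R L)"
    have x1: "fst x \<in> perms R" and x2: "snd x \<in> R \<rightarrow>\<^sub>E carrier L"
      and y1: "fst y \<in> perms R" and y2: "snd y \<in> R \<rightarrow>\<^sub>E carrier L"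
      and z1: "fst z \<in> perms R" and z2: "snd z \<in> R \<rightarrow>\<^sub>E carrier L"
      using x y z by (auto simp: wr_carrier)
    have e1: "restrict (restrict (fst x \<circ> fst y) R \<circ> fst z) R = restrict (fst x \<circ> restrict (fst y \<circ> fst z) R) R"
      by (rule restrict_ext) (simp add: perms_mem[OF z1])
    have e2: "restrict (\<lambda>C. restrict (\<lambda>C. snd x (fst y C) \<otimes>\<^bsub>L\<^esub> snd y C) R (fst z C) \<otimes>\<^bsub>L\<^esub> snd z C) R
       = restrict (\<lambda>C. snd x (restrict (fst y \<circ> fst z) R C) \<otimes>\<^bsub>L\<^esub> restrict (\<lambda>C. snd y (fst z C) \<otimes>\<^bsub>L\<^esub> snd z C) R C) R"
    proof (rule restrict_ext)
      fix C assume C: "C \<in> R"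
      have zC: "fst z C \<in> R" by (rule perms_mem[OF z1 C])
      have yzC: "fst y (fst z C) \<in> R" by (rule perms_mem[OF y1 zC])
      show "restrict (\<lambda>C. snd x (fst y C) \<otimes>\<^bsub>L\<^esub> snd y C) R (fst z C) \<otimes>\<^bsub>L\<^esub> snd z C
         = snd x (restrict (fst y \<circ> fst z) R C) \<otimes>\<^bsub>L\<^esub> restrict (\<lambda>C. snd y (fst z C) \<otimes>\<^bsub>L\<^esub> snd z C) R C"
        using C zC by (simp add: L.m_assoc fm[OF x2 yzC] fm[OF y2 zC] fm[OF z2 C])
    qed
    show "x \<otimes>\<^bsub>wr R L\<^esub> y \<otimes>\<^bsub>wr R L\<^esub> z = x \<otimes>\<^bsub>wr R L\<^esub> (y \<otimes>\<^bsub>wr R L\<^esub> z)"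
      unfolding wr_mult by (simp only: fst_conv snd_conv e1 e2)
  next
    fix x assume x: "x \<in> carrier (wr R L)"
    have x1: "fst x \<in> perms R" and x2: "snd x \<in> R \<rightarrow>\<^sub>E carrier L"
      using x by (auto simp: wr_carrier)
    have e1: "restrict (restrict id R \<circ> fst x) R = fst x"
    proof -
      have "restrict (restrict id R \<circ> fst x) R = restrict (fst x) R"
        by (rule restrict_ext) (simp add: perms_mem[OF x1])
      also have "\<dots> = fst x" using perms_ext[OF x1] by (rule extensional_restrict)
      finally show ?thesis .
    qed
    have e2: "restrict (\<lambda>C. restrict (\<lambda>C. \<one>\<^bsub>L\<^esub>) R (fst x C) \<otimes>\<^bsub>L\<^esub> snd x C) R = snd x"
    proof -
      have "restrict (\<lambda>C. restrict (\<lambda>C. \<one>\<^bsub>L\<^esub>) R (fst x C) \<otimes>\<^bsub>L\<^esub> snd x C) R = restrict (snd x) R"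
        by (rule restrict_ext) (simp add: perms_mem[OF x1] fm[OF x2])
      also have "\<dots> = snd x" using x2 by (intro extensional_restrict) (simp add: PiE_def)
      finally show ?thesis .
    qed
    show "\<one>\<^bsub>wr R L\<^esub> \<otimes>\<^bsub>wr R L\<^esub> x = x"
      unfolding wr_mult wr_one by (simp only: fst_conv snd_conv e1 e2 prod.collapse)
  next
    fix x assume x: "x \<in> carrier (wr R L)"
    have x1: "fst x \<in> perms R" and x2: "snd x \<in> R \<rightarrow>\<^sub>E carrier L"
      using x by (auto simp: wr_carrier)
    define s' where "s' = restrict (inv_into R (fst x)) R"
    define f' where "f' = restrict (\<lambda>C. inv\<^bsub>L\<^esub> (snd x (s' C))) R"
    have s'1: "s' \<in> perms R" unfolding s'_def by (rule perms_inv[OF x1])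
    have s'x: "s' (fst x C) = C" if "C \<in> R" for C
      using that perms_mem[OF x1 that] bij_betw_inv_into_left[OF perms_bij[OF x1] that] by (simp add: s'_def)
    have f'2: "f' \<in> R \<rightarrow>\<^sub>E carrier L"
      unfolding f'_def using fm[OF x2 perms_mem[OF s'1]] by simp
    have "(s', f') \<in> carrier (wr R L)" unfolding wr_carrier using s'1 f'2 by simp
    moreover have "(s', f') \<otimes>\<^bsub>wr R L\<^esub> x = \<one>\<^bsub>wr R L\<^esub>"
    proof -
      have e1: "restrict (s' \<circ> fst x) R = restrict id R"
        by (rule restrict_ext) (simp add: s'x)
      have e2: "restrict (\<lambda>C. f' (fst x C) \<otimes>\<^bsub>L\<^esub> snd x C) R = restrict (\<lambda>C. \<one>\<^bsub>L\<^esub>) R"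
      proof (rule restrict_ext)
        fix C assume C: "C \<in> R"
        show "f' (fst x C) \<otimes>\<^bsub>L\<^esub> snd x C = \<one>\<^bsub>L\<^esub>"
          using C perms_mem[OF x1 C] by (simp add: f'_def s'x fm[OF x2 C])
      qed
      show ?thesis unfolding wr_mult wr_one by (simp only: fst_conv snd_conv e1 e2)
    qed
    ultimately show "\<exists>y\<in>carrier (wr R L). y \<otimes>\<^bsub>wr R L\<^esub> x = \<one>\<^bsub>wr R L\<^esub>" by (intro bexI)
  qed
qed

lemma cont_paste2:
  assumes op: "\<And>d. openin X {x \<in> topspace X. k x = d}"
    and ct: "\<And>d x. x \<in> topspace X \<Longrightarrow> k x = d \<Longrightarrow> continuous_map (subtopology X {x \<in> topspace X. k x = d}) Y (F d)"
  shows "continuous_map X Y (\<lambda>x. F (k x) x)"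
proof (rule cont_paste[OF op])
  fix d
  show "continuous_map (subtopology X {x \<in> topspace X. k x = d}) Y (F d)"
  proof (cases "\<exists>x \<in> topspace X. k x = d")
    case True
    then obtain x where "x \<in> topspace X" "k x = d" by (elim bexE)
    then show ?thesis by (rule ct)
  next
    case False
    then have E: "{x \<in> topspace X. k x = d} = {}" by blast
    show ?thesis unfolding E by simp
  qed
qed

definition wtop :: "'r set \<Rightarrow> 'l topology \<Rightarrow> (('r \<Rightarrow> 'r) \<times> ('r \<Rightarrow> 'l)) topology" where
  "wtop R U = prod_topology (discrete_topology (perms R)) (product_topology (\<lambda>_. U) R)"

lemma wtop_topspace: "topspace (wtop R U) = perms R \<times> (R \<rightarrow>\<^sub>E topspace U)"
  by (simp add: wtop_def)

definition winv :: "'r set \<Rightarrow> ('l, 'z) monoid_scheme \<Rightarrow> ('r \<Rightarrow> 'r) \<times> ('r \<Rightarrow> 'l) \<Rightarrow> ('r \<Rightarrow> 'r) \<times> ('r \<Rightarrow> 'l)" where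
  "winv R L x = (restrict (inv_into R (fst x)) R,
      restrict (\<lambda>C. inv\<^bsub>L\<^esub> (snd x (restrict (inv_into R (fst x)) R C))) R)"

lemma wr_inv:
  assumes gL: "group L" and x: "x \<in> carrier (wr R L)"
  shows "inv\<^bsub>wr R L\<^esub> x = winv R L x"
proof -
  interpret L: group L by (fact gL)
  interpret W: group "wr R L" by (rule wr_group[OF gL])
  have fm: "f C \<in> carrier L" if "f \<in> R \<rightarrow>\<^sub>E carrier L" "C \<in> R" for f C
    using that by auto
  have x1: "fst x \<in> perms R" and x2: "snd x \<in> R \<rightarrow>\<^sub>E carrier L"
    using x by (auto simp: wr_carrier)
  define s' where "s' = restrict (inv_into R (fst x)) R"
  define f' where "f' = restrict (\<lambda>C. inv\<^bsub>L\<^esub> (snd x (s' C))) R"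
  have wi: "winv R L x = (s', f')" by (simp add: winv_def s'_def f'_def)
  have s'1: "s' \<in> perms R" unfolding s'_def by (rule perms_inv[OF x1])
  have s'x: "s' (fst x C) = C" if "C \<in> R" for C
    using that perms_mem[OF x1 that] bij_betw_inv_into_left[OF perms_bij[OF x1] that] by (simp add: s'_def)
  have f'2: "f' \<in> R \<rightarrow>\<^sub>E carrier L"
    unfolding f'_def using fm[OF x2 perms_mem[OF s'1]] by simp
  have c: "(s', f') \<in> carrier (wr R L)" unfolding wr_carrier using s'1 f'2 by simp
  have "(s', f') \<otimes>\<^bsub>wr R L\<^esub> x = \<one>\<^bsub>wr R L\<^esub>"
  proof -
    have e1: "restrict (s' \<circ> fst x) R = restrict id R"
      by (rule restrict_ext) (simp add: s'x)
    have e2: "restrict (\<lambda>C. f' (fst x C) \<otimes>\<^bsub>L\<^esub> snd x C) R = restrict (\<lambda>C. \<one>\<^bsub>L\<^esub>) R"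
    proof (rule restrict_ext)
      fix C assume C: "C \<in> R"
      show "f' (fst x C) \<otimes>\<^bsub>L\<^esub> snd x C = \<one>\<^bsub>L\<^esub>"
        using C perms_mem[OF x1 C] by (simp add: f'_def s'x fm[OF x2 C])
    qed
    show ?thesis unfolding wr_mult wr_one by (simp only: fst_conv snd_conv e1 e2)
  qed
  then have "inv\<^bsub>wr R L\<^esub> x = (s', f')" by (rule W.inv_equality[OF _ x c])
  then show ?thesis by (simp only: wi)
qed

lemma wtop_pairedI:
  "continuous_map Z (discrete_topology (perms R)) f \<Longrightarrow> continuous_map Z (product_topology (\<lambda>_. U) R) g
   \<Longrightarrow> continuous_map Z (wtop R U) (\<lambda>x. (f x, g x))"
  unfolding wtop_def by (rule continuous_map_pairedI)

lemma restrict_cont: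
  assumes "\<And>C. C \<in> R \<Longrightarrow> continuous_map Z U (\<lambda>p. h p C)"
  shows "continuous_map Z (product_topology (\<lambda>_. U) R) (\<lambda>p. restrict (h p) R)"
  unfolding continuous_map_componentwise
proof (intro conjI ballI)
  show "(\<lambda>p. restrict (h p) R) ` topspace Z \<subseteq> extensional R" by auto
  fix C assume C: "C \<in> R"
  show "continuous_map Z U (\<lambda>p. restrict (h p) R C)"
    by (rule continuous_map_eq[OF assms[OF C]]) (simp add: C)
qed

lemma perms_finite: "finite R \<Longrightarrow> finite (perms R)"
proof -
  assume "finite R"
  then have "finite (R \<rightarrow>\<^sub>E R)" by (intro finite_PiE)
  moreover have "perms R \<subseteq> R \<rightarrow>\<^sub>E R" by (auto simp: perms_def)
  ultimately show ?thesis by (rule finite_subset[rotated])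
qed

lemma wr_compact_group:
  assumes CG: "compact_group L U" and fin: "finite R"
  shows "compact_group (wr R L) (wtop R U)"
proof -
  have TG: "topological_group L U" using CG by (simp add: compact_group_def)
  have gL: "group L" by (rule tg_group[OF TG])
  have tsU: "topspace U = carrier L" by (rule tg_topspace[OF TG])
  have tsW: "topspace (wtop R U) = carrier (wr R L)" by (simp add: wtop_topspace wr_carrier tsU)
  let ?X = "prod_topology (wtop R U) (wtop R U)"
  have cfst: "continuous_map (wtop R U) (discrete_topology (perms R)) fst"
    unfolding wtop_def by (rule continuous_map_fst)
  have csnd: "continuous_map (wtop R U) (product_topology (\<lambda>_. U) R) snd"
    unfolding wtop_def by (rule continuous_map_snd)
  have cev: "continuous_map (wtop R U) U (\<lambda>x. snd x C)" if "C \<in> R" for C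
    using continuous_map_compose[OF csnd continuous_map_product_projection[OF that, of "\<lambda>_. U"]]
    by (simp add: o_def)
  have mc: "continuous_map ?X (wtop R U) (\<lambda>p. fst p \<otimes>\<^bsub>wr R L\<^esub> snd p)"
  proof -
    have op: "openin ?X {p \<in> topspace ?X. (fst (fst p), fst (snd p)) = d}" for d
    proof -
      have "{p \<in> topspace ?X. (fst (fst p), fst (snd p)) = d}
          = {p \<in> topspace ?X. fst (fst p) = fst d} \<inter> {p \<in> topspace ?X. fst (snd p) = snd d}"
        by (auto simp: prod_eq_iff)
      moreover have "openin ?X {p \<in> topspace ?X. fst (fst p) = fst d}"
        by (rule discrete_fibre_open[OF continuous_map_compose[OF continuous_map_fst cfst, unfolded o_def]])
      moreover have "openin ?X {p \<in> topspace ?X. fst (snd p) = snd d}"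
        by (rule discrete_fibre_open[OF continuous_map_compose[OF continuous_map_snd cfst, unfolded o_def]])
      ultimately show ?thesis by (simp only: openin_Int)
    qed
    have ct: "continuous_map (subtopology ?X {p \<in> topspace ?X. (fst (fst p), fst (snd p)) = d}) (wtop R U)
        (\<lambda>p. (restrict (fst d \<circ> snd d) R, restrict (\<lambda>C. snd (fst p) (snd d C) \<otimes>\<^bsub>L\<^esub> snd (snd p) C) R))"
      if p: "p \<in> topspace ?X" "(fst (fst p), fst (snd p)) = d" for d p
    proof (rule continuous_map_from_subtopology, rule wtop_pairedI)
      have "fst p \<in> topspace (wtop R U)" "snd p \<in> topspace (wtop R U)" using p(1) by auto
      then have "fst (fst p) \<in> perms R" "fst (snd p) \<in> perms R" by (auto simp: wtop_topspace)
      then have d1: "fst d \<in> perms R" and d2: "snd d \<in> perms R" using p(2) by auto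
      show "continuous_map ?X (discrete_topology (perms R)) (\<lambda>p. restrict (fst d \<circ> snd d) R)"
        using perms_comp[OF d1 d2] by simp
      show "continuous_map ?X (product_topology (\<lambda>_. U) R) (\<lambda>p. restrict (\<lambda>C. snd (fst p) (snd d C) \<otimes>\<^bsub>L\<^esub> snd (snd p) C) R)"
      proof (rule restrict_cont)
        fix C assume C: "C \<in> R"
        have dC: "snd d C \<in> R" by (rule perms_mem[OF d2 C])
        show "continuous_map ?X U (\<lambda>p. snd (fst p) (snd d C) \<otimes>\<^bsub>L\<^esub> snd (snd p) C)"
          by (rule tg_mult_cont[OF TG continuous_map_compose[OF continuous_map_fst cev[OF dC], unfolded o_def]
                continuous_map_compose[OF continuous_map_snd cev[OF C], unfolded o_def]])
      qed
    qed
    have "continuous_map ?X (wtop R U) (\<lambda>p. (restrict (fst (fst (fst p), fst (snd p)) \<circ> snd (fst (fst p), fst (snd p))) R,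
        restrict (\<lambda>C. snd (fst p) (snd (fst (fst p), fst (snd p)) C) \<otimes>\<^bsub>L\<^esub> snd (snd p) C) R))"
      by (rule cont_paste2[OF op ct])
    then show ?thesis by (rule continuous_map_eq) (simp add: wr_mult)
  qed
  have ic: "continuous_map (wtop R U) (wtop R U) (\<lambda>x. inv\<^bsub>wr R L\<^esub> x)"
  proof -
    have op: "openin (wtop R U) {p \<in> topspace (wtop R U). fst p = d}" for d
      by (rule discrete_fibre_open[OF cfst])
    have ct: "continuous_map (subtopology (wtop R U) {p \<in> topspace (wtop R U). fst p = d}) (wtop R U)
        (\<lambda>p. (restrict (inv_into R d) R, restrict (\<lambda>C. inv\<^bsub>L\<^esub> (snd p (restrict (inv_into R d) R C))) R))"
      if p: "p \<in> topspace (wtop R U)" "fst p = d" for d p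
    proof (rule continuous_map_from_subtopology, rule wtop_pairedI)
      have d1: "d \<in> perms R" using p by (auto simp: wtop_topspace)
      show "continuous_map (wtop R U) (discrete_topology (perms R)) (\<lambda>p. restrict (inv_into R d) R)"
        using perms_inv[OF d1] by simp
      show "continuous_map (wtop R U) (product_topology (\<lambda>_. U) R) (\<lambda>p. restrict (\<lambda>C. inv\<^bsub>L\<^esub> (snd p (restrict (inv_into R d) R C))) R)"
      proof (rule restrict_cont)
        fix C assume C: "C \<in> R"
        have dC: "restrict (inv_into R d) R C \<in> R" by (rule perms_mem[OF perms_inv[OF d1] C])
        show "continuous_map (wtop R U) U (\<lambda>p. inv\<^bsub>L\<^esub> (snd p (restrict (inv_into R d) R C)))"
          by (rule tg_inv_cont[OF TG cev[OF dC]])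
      qed
    qed
    have "continuous_map (wtop R U) (wtop R U) (\<lambda>p. (restrict (inv_into R (fst p)) R,
        restrict (\<lambda>C. inv\<^bsub>L\<^esub> (snd p (restrict (inv_into R (fst p)) R C))) R))"
      by (rule cont_paste2[OF op ct])
    then show ?thesis by (rule continuous_map_eq) (simp add: wr_inv[OF gL] tsW winv_def)
  qed
  have cW: "compact_space (wtop R U)"
  proof -
    have "compact_space (discrete_topology (perms R))" using perms_finite[OF fin] by (simp add: compact_space_discrete_topology)
    moreover have "compact_space (product_topology (\<lambda>_. U) R)"
      using CG by (simp add: compact_space_product_topology compact_group_def)
    ultimately show ?thesis unfolding wtop_def by (simp add: compact_space_prod_topology)
  qed
  have hW: "Hausdorff_space (wtop R U)"
  proof -
    have "Hausdorff_space (product_topology (\<lambda>_. U) R)"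
      using CG by (simp add: Hausdorff_space_product_topology compact_group_def)
    then show ?thesis unfolding wtop_def by (simp add: Hausdorff_space_prod_topology)
  qed
  show ?thesis unfolding compact_group_def topological_group_def
    using wr_group[OF gL] tsW mc ic cW hW by (simp only: simp_thms)
qed

definition trv :: "('a, 'c) monoid_scheme \<Rightarrow> 'a set \<Rightarrow> 'a set \<Rightarrow> 'a" where
  "trv G H C = (if C = H then \<one>\<^bsub>G\<^esub> else (SOME x. x \<in> C))"

context
  fixes G (structure) and H
  assumes gG: "group G" and sH: "subgroup H G"
begin

lemma Hs: "H \<subseteq> carrier G" by (rule subgroup.subset[OF sH])

lemma H_in_R: "H \<in> rcosets H"
proof -
  interpret group G by (fact gG)
  have "H #> \<one> \<in> rcosets H" by (rule rcosetsI[OF Hs one_closed])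
  then show ?thesis using Hs by simp
qed

lemma R_carrier: "C \<in> rcosets H \<Longrightarrow> C \<subseteq> carrier G"
  by (rule subgroup.rcosets_carrier[OF sH gG])

lemma trv_mem: assumes C: "C \<in> rcosets H" shows "trv G H C \<in> C"
proof (cases "C = H")
  case True
  then show ?thesis using subgroup.one_closed[OF sH] by (simp add: trv_def)
next
  case False
  interpret group G by (fact gG)
  obtain a where a: "a \<in> carrier G" "C = H #> a" using C by (auto simp: RCOSETS_def)
  have "a \<in> C" using rcos_self[OF a(1) sH] a(2) by simp
  then have "(SOME x. x \<in> C) \<in> C" by (rule someI)
  then show ?thesis using False by (simp add: trv_def)
qed

lemma trv_carrier: "C \<in> rcosets H \<Longrightarrow> trv G H C \<in> carrier G"
  using trv_mem R_carrier by blast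

lemma trv_coset: assumes C: "C \<in> rcosets H" shows "H #> trv G H C = C"
proof -
  interpret group G by (fact gG)
  obtain a where a: "a \<in> carrier G" "C = H #> a" using C by (auto simp: RCOSETS_def)
  have "trv G H C \<in> H #> a" using trv_mem[OF C] a(2) by simp
  then have "H #> a = H #> trv G H C" by (rule repr_independence[OF _ a(1) sH])
  then show ?thesis using a(2) by simp
qed

lemma trv_H: "trv G H H = \<one>"
  by (simp add: trv_def)

lemma rcos_eq_iff:
  assumes x: "x \<in> carrier G" and y: "y \<in> carrier G"
  shows "H #> x = H #> y \<longleftrightarrow> x \<otimes> inv y \<in> H"
proof -
  interpret group G by (fact gG)
  show ?thesis
  proof
    assume "H #> x = H #> y"
    then have "x \<in> H #> y" using rcos_self[OF x sH] by simp
    then show "x \<otimes> inv y \<in> H" by (rule subgroup.rcos_module_imp[OF sH gG y])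
  next
    assume "x \<otimes> inv y \<in> H"
    then have "x \<in> H #> y" by (rule subgroup.rcos_module_rev[OF sH gG y x])
    then show "H #> x = H #> y" by (rule repr_independence[OF _ y sH, symmetric])
  qed
qed

lemma R_mult: assumes C: "C \<in> rcosets H" and g: "g \<in> carrier G" shows "C #> g \<in> rcosets H"
proof -
  interpret group G by (fact gG)
  obtain a where a: "a \<in> carrier G" "C = H #> a" using C by (auto simp: RCOSETS_def)
  have "C #> g = H #> (a \<otimes> g)" using coset_mult_assoc[OF Hs a(1) g] a(2) by simp
  then show ?thesis using rcosetsI[OF Hs m_closed[OF a(1) g]] by simp
qed

lemma R_mult_assoc: assumes C: "C \<in> rcosets H" and g: "g \<in> carrier G" and h: "h \<in> carrier G"
  shows "(C #> g) #> h = C #> (g \<otimes> h)"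
  by (rule group.coset_mult_assoc[OF gG R_carrier[OF C] g h])

lemma R_mult_one: "C \<in> rcosets H \<Longrightarrow> C #> \<one> = C"
  by (rule group.coset_mult_one[OF gG R_carrier])

lemma key_in_H:
  assumes C: "C \<in> rcosets H" and g: "g \<in> carrier G"
  shows "trv G H (C #> inv g) \<otimes> g \<otimes> inv (trv G H C) \<in> H"
proof -
  interpret group G by (fact gG)
  let ?D = "C #> inv g"
  have D: "?D \<in> rcosets H" by (rule R_mult[OF C inv_closed[OF g]])
  have tC: "trv G H C \<in> carrier G" by (rule trv_carrier[OF C])
  have tD: "trv G H ?D \<in> carrier G" by (rule trv_carrier[OF D])
  have "H #> trv G H ?D = ?D" by (rule trv_coset[OF D])
  also have "?D = (H #> trv G H C) #> inv g" using trv_coset[OF C] by simp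
  also have "\<dots> = H #> (trv G H C \<otimes> inv g)" by (rule coset_mult_assoc[OF Hs tC inv_closed[OF g]])
  finally have "trv G H ?D \<otimes> inv (trv G H C \<otimes> inv g) \<in> H"
    using rcos_eq_iff[OF tD m_closed[OF tC inv_closed[OF g]]] by simp
  moreover have "inv (trv G H C \<otimes> inv g) = g \<otimes> inv (trv G H C)"
    using inv_mult_group[OF tC inv_closed[OF g]] g by simp
  ultimately show ?thesis using tD g tC by (simp add: m_assoc)
qed

lemma shift_perm:
  assumes g: "g \<in> carrier G"
  shows "restrict (\<lambda>C. C #> inv g) (rcosets H) \<in> perms (rcosets H)"
proof -
  interpret group G by (fact gG)
  let ?R = "rcosets H"
  have "bij_betw (\<lambda>C. C #> inv g) ?R ?R"
  proof (rule bij_betw_byWitness[where f' = "\<lambda>C. C #> g"])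
    show "\<forall>a\<in>?R. a #> inv g #> g = a"
      using R_mult_assoc[OF _ inv_closed[OF g] g] R_mult_one g by simp
    show "\<forall>a\<in>?R. a #> g #> inv g = a"
      using R_mult_assoc[OF _ g inv_closed[OF g]] R_mult_one g by simp
    show "(\<lambda>C. C #> inv g) ` ?R \<subseteq> ?R" using R_mult[OF _ inv_closed[OF g]] by blast
    show "(\<lambda>C. C #> g) ` ?R \<subseteq> ?R" using R_mult[OF _ g] by blast
  qed
  then have "bij_betw (restrict (\<lambda>C. C #> inv g) ?R) ?R ?R"
    by (rule bij_betw_cong[THEN iffD1, rotated]) simp
  moreover have "restrict (\<lambda>C. C #> inv g) ?R \<in> ?R \<rightarrow>\<^sub>E ?R" using R_mult[OF _ inv_closed[OF g]] by simp
  ultimately show ?thesis by (simp add: perms_def)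
qed

end

lemma induced_rep:
  fixes G (structure) and L :: "('l, 'z) monoid_scheme"
  assumes TG: "topological_group G T" and sH: "subgroup H G" and oH: "openin T H"
    and fin: "finite (rcosets H)"
    and CGL: "compact_group L U" and ah: "alpha \<in> hom (G\<lparr>carrier := H\<rparr>) L"
    and ac: "continuous_map (subtopology T H) U alpha"
  shows "\<exists>\<Phi>. \<Phi> \<in> hom G (wr (rcosets H) L) \<and> continuous_map T (wtop (rcosets H) U) \<Phi> \<and>
            (\<forall>h\<in>H. fst (\<Phi> h) H = H \<and> snd (\<Phi> h) H = alpha h)"
proof -
  interpret group G by (rule tg_group[OF TG])
  have gG: "group G" by (rule tg_group[OF TG])
  have TGL: "topological_group L U" using CGL by (simp add: compact_group_def)
  interpret L: group L by (rule tg_group[OF TGL])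
  have tsT: "topspace T = carrier G" by (rule tg_topspace[OF TG])
  have tsU: "topspace U = carrier L" by (rule tg_topspace[OF TGL])
  define R where "R = rcosets H"
  define tr where "tr = trv G H"
  have RR: "C \<in> R \<Longrightarrow> g \<in> carrier G \<Longrightarrow> C #> g \<in> R" for C g
    unfolding R_def by (rule R_mult[OF gG sH])
  have trc: "C \<in> R \<Longrightarrow> tr C \<in> carrier G" for C
    unfolding R_def tr_def by (rule trv_carrier[OF gG sH])
  have key: "C \<in> R \<Longrightarrow> g \<in> carrier G \<Longrightarrow> tr (C #> inv g) \<otimes> g \<otimes> inv (tr C) \<in> H" for C g
    unfolding R_def tr_def by (rule key_in_H[OF gG sH])
  have ass: "C \<in> R \<Longrightarrow> g \<in> carrier G \<Longrightarrow> h \<in> carrier G \<Longrightarrow> (C #> g) #> h = C #> (g \<otimes> h)" for C g h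
    unfolding R_def by (rule R_mult_assoc[OF gG sH])
  have HR: "H \<in> R" unfolding R_def by (rule H_in_R[OF gG sH])
  have Hs: "H \<subseteq> carrier G" by (rule subgroup.subset[OF sH])
  have aH: "alpha x \<in> carrier L" if "x \<in> H" for x
    using hom_in_carrier[OF ah, of x] that by simp
  have aM: "alpha (x \<otimes> y) = alpha x \<otimes>\<^bsub>L\<^esub> alpha y" if "x \<in> H" "y \<in> H" for x y
    using hom_mult[OF ah, of x y] that by simp
  define \<Phi> where "\<Phi> g = (restrict (\<lambda>C. C #> inv g) R,
      restrict (\<lambda>C. alpha (tr (C #> inv g) \<otimes> g \<otimes> inv (tr C))) R)" for g
  have Phi_car: "\<Phi> g \<in> carrier (wr R L)" if g: "g \<in> carrier G" for g
  proof -
    have "restrict (\<lambda>C. C #> inv g) R \<in> perms R" unfolding R_def by (rule shift_perm[OF gG sH g])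
    moreover have "restrict (\<lambda>C. alpha (tr (C #> inv g) \<otimes> g \<otimes> inv (tr C))) R \<in> R \<rightarrow>\<^sub>E carrier L"
      using aH[OF key[OF _ g]] by simp
    ultimately show ?thesis by (simp add: \<Phi>_def wr_carrier)
  qed
  have Phi_hom: "\<Phi> \<in> hom G (wr R L)"
  proof (rule homI)
    fix g assume "g \<in> carrier G" then show "\<Phi> g \<in> carrier (wr R L)" by (rule Phi_car)
  next
    fix g g' assume g: "g \<in> carrier G" and g': "g' \<in> carrier G"
    have e1: "restrict (\<lambda>C. C #> inv (g \<otimes> g')) R = restrict (fst (\<Phi> g) \<circ> fst (\<Phi> g')) R"
    proof (rule restrict_ext)
      fix C assume C: "C \<in> R"
      have "inv (g \<otimes> g') = inv g' \<otimes> inv g" by (rule inv_mult_group[OF g g'])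
      then have "C #> inv (g \<otimes> g') = (C #> inv g') #> inv g"
        using ass[OF C inv_closed[OF g'] inv_closed[OF g]] by simp
      then show "C #> inv (g \<otimes> g') = (fst (\<Phi> g) \<circ> fst (\<Phi> g')) C"
        using C RR[OF C inv_closed[OF g']] by (simp add: \<Phi>_def)
    qed
    have e2: "restrict (\<lambda>C. alpha (tr (C #> inv (g \<otimes> g')) \<otimes> (g \<otimes> g') \<otimes> inv (tr C))) R
        = restrict (\<lambda>C. snd (\<Phi> g) (fst (\<Phi> g') C) \<otimes>\<^bsub>L\<^esub> snd (\<Phi> g') C) R"
    proof (rule restrict_ext)
      fix C assume C: "C \<in> R"
      define C' where "C' = C #> inv g'"
      have C': "C' \<in> R" unfolding C'_def by (rule RR[OF C inv_closed[OF g']])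
      have C'': "C' #> inv g = C #> inv (g \<otimes> g')"
        unfolding C'_def using ass[OF C inv_closed[OF g'] inv_closed[OF g]] inv_mult_group[OF g g'] by simp
      define a where "a = tr (C #> inv (g \<otimes> g'))"
      define b where "b = tr C'"
      define c where "c = tr C"
      have a: "a \<in> carrier G" unfolding a_def by (rule trc[OF RR[OF C inv_closed[OF m_closed[OF g g']]]])
      have b: "b \<in> carrier G" unfolding b_def by (rule trc[OF C'])
      have c: "c \<in> carrier G" unfolding c_def by (rule trc[OF C])
      have k1: "a \<otimes> g \<otimes> inv b \<in> H" using key[OF C' g] unfolding C'' a_def b_def .
      have k2: "b \<otimes> g' \<otimes> inv c \<in> H" using key[OF C g'] unfolding b_def c_def C'_def .
      have "snd (\<Phi> g) (fst (\<Phi> g') C) \<otimes>\<^bsub>L\<^esub> snd (\<Phi> g') C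
          = alpha (a \<otimes> g \<otimes> inv b) \<otimes>\<^bsub>L\<^esub> alpha (b \<otimes> g' \<otimes> inv c)"
        using C C' C'' by (simp add: \<Phi>_def a_def b_def c_def C'_def)
      also have "\<dots> = alpha ((a \<otimes> g \<otimes> inv b) \<otimes> (b \<otimes> g' \<otimes> inv c))" by (rule aM[OF k1 k2, symmetric])
      also have "(a \<otimes> g \<otimes> inv b) \<otimes> (b \<otimes> g' \<otimes> inv c) = a \<otimes> (g \<otimes> g') \<otimes> inv c"
      proof -
        have "inv b \<otimes> (b \<otimes> (g' \<otimes> inv c)) = g' \<otimes> inv c"
          using b g' c by (simp add: m_assoc[symmetric])
        then show ?thesis using a b c g g' by (simp add: m_assoc)
      qed
      finally show "alpha (tr (C #> inv (g \<otimes> g')) \<otimes> (g \<otimes> g') \<otimes> inv (tr C))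
          = snd (\<Phi> g) (fst (\<Phi> g') C) \<otimes>\<^bsub>L\<^esub> snd (\<Phi> g') C"
        by (simp add: a_def c_def)
    qed
    show "\<Phi> (g \<otimes> g') = \<Phi> g \<otimes>\<^bsub>wr R L\<^esub> \<Phi> g'"
      unfolding wr_mult by (simp only: \<Phi>_def[of "g \<otimes> g'"] e1 e2 fst_conv snd_conv)
  qed
  have Phi_H: "fst (\<Phi> h) H = H \<and> snd (\<Phi> h) H = alpha h" if h: "h \<in> H" for h
  proof -
    have hc: "h \<in> carrier G" using h Hs by blast
    have "H #> inv h = H" by (rule subgroup.rcos_const[OF sH gG subgroup.m_inv_closed[OF sH h]])
    moreover have "tr H = \<one>" unfolding tr_def by (rule trv_H[OF gG sH])
    ultimately show ?thesis using HR hc by (simp add: \<Phi>_def)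
  qed
  have cos: "C #> x = H #> (tr C \<otimes> x)" if C: "C \<in> R" and x: "x \<in> carrier G" for C x
  proof -
    have "C #> x = (H #> tr C) #> x" using trv_coset[OF gG sH, of C] C by (simp add: R_def tr_def)
    also have "\<dots> = H #> (tr C \<otimes> x)" by (rule coset_mult_assoc[OF Hs trc[OF C] x])
    finally show ?thesis .
  qed
  have finR: "finite R" unfolding R_def by (fact fin)
  define k where "k g = restrict (\<lambda>C. C #> inv g) R" for g
  have kperm: "k g \<in> perms R" if "g \<in> carrier G" for g
    unfolding k_def R_def by (rule shift_perm[OF gG sH that])
  have cconst: "continuous_map X T (\<lambda>x. a)" if "a \<in> carrier G" for X a
    using that tsT by simp
  have op: "openin T {g \<in> topspace T. k g = s}" for s
  proof (subst openin_subopen, intro ballI)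
    fix g0 assume g0: "g0 \<in> {g \<in> topspace T. k g = s}"
    then have g0c: "g0 \<in> carrier G" and g0s: "k g0 = s" using tsT by auto
    define V where "V C = {g \<in> topspace T. tr C \<otimes> inv g \<otimes> inv (tr C \<otimes> inv g0) \<in> H}" for C
    have oV: "openin T (V C)" if C: "C \<in> R" for C
    proof -
      have "continuous_map T T (\<lambda>g. tr C \<otimes> inv g \<otimes> inv (tr C \<otimes> inv g0))"
        by (intro tg_mult_cont[OF TG] tg_inv_cont[OF TG] continuous_map_id[unfolded id_def] cconst
            inv_closed m_closed trc[OF C] g0c)
      then show ?thesis unfolding V_def by (rule openin_continuous_map_preimage[OF _ oH])
    qed
    let ?W = "(\<Inter>C\<in>R. V C) \<inter> topspace T"
    show "\<exists>W. openin T W \<and> g0 \<in> W \<and> W \<subseteq> {g \<in> topspace T. k g = s}"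
    proof (intro exI conjI)
      show "openin T ?W" by (rule openin_INT[OF finR oV])
      have "g0 \<in> V C" if C: "C \<in> R" for C
      proof -
        have "tr C \<otimes> inv g0 \<otimes> inv (tr C \<otimes> inv g0) = \<one>"
          by (rule r_inv[OF m_closed[OF trc[OF C] inv_closed[OF g0c]]])
        then show ?thesis using g0c tsT subgroup.one_closed[OF sH] by (simp add: V_def)
      qed
      then show "g0 \<in> ?W" using g0c tsT by simp
      show "?W \<subseteq> {g \<in> topspace T. k g = s}"
      proof
        fix g assume gW: "g \<in> ?W"
        then have gc: "g \<in> carrier G" using tsT by simp
        have "k g = k g0" unfolding k_def
        proof (rule restrict_ext)
          fix C assume C: "C \<in> R"
          have "g \<in> V C" using gW C by simp
          then have "tr C \<otimes> inv g \<otimes> inv (tr C \<otimes> inv g0) \<in> H" by (simp add: V_def)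
          then have "H #> (tr C \<otimes> inv g) = H #> (tr C \<otimes> inv g0)"
            using rcos_eq_iff[OF gG sH m_closed[OF trc[OF C] inv_closed[OF gc]] m_closed[OF trc[OF C] inv_closed[OF g0c]]]
            by simp
          then show "C #> inv g = C #> inv g0"
            using cos[OF C inv_closed[OF gc]] cos[OF C inv_closed[OF g0c]] by simp
        qed
        then show "g \<in> {g \<in> topspace T. k g = s}" using gW g0s by simp
      qed
    qed
  qed
  define F where "F s g = (s, restrict (\<lambda>C. alpha (tr (s C) \<otimes> g \<otimes> inv (tr C))) R)" for s g
  have ct: "continuous_map (subtopology T {g \<in> topspace T. k g = s}) (wtop R U) (F s)"
    if g0: "g0 \<in> topspace T" "k g0 = s" for s g0
  proof -
    let ?S = "subtopology T {g \<in> topspace T. k g = s}"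
    have s: "s \<in> perms R" using kperm g0 tsT by auto
    have "continuous_map ?S (wtop R U) (\<lambda>g. (s, restrict (\<lambda>C. alpha (tr (s C) \<otimes> g \<otimes> inv (tr C))) R))"
    proof (rule wtop_pairedI)
      show "continuous_map ?S (discrete_topology (perms R)) (\<lambda>g. s)" using s by simp
      show "continuous_map ?S (product_topology (\<lambda>_. U) R) (\<lambda>g. restrict (\<lambda>C. alpha (tr (s C) \<otimes> g \<otimes> inv (tr C))) R)"
      proof (rule restrict_cont)
        fix C assume C: "C \<in> R"
        have sC: "s C \<in> R" by (rule perms_mem[OF s C])
        have m: "continuous_map T T (\<lambda>g. tr (s C) \<otimes> g \<otimes> inv (tr C))"
          by (intro tg_mult_cont[OF TG] continuous_map_id[unfolded id_def] cconst
            inv_closed trc[OF C] trc[OF sC])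
        have "continuous_map ?S (subtopology T H) (\<lambda>g. tr (s C) \<otimes> g \<otimes> inv (tr C))"
          unfolding continuous_map_in_subtopology
        proof
          show "continuous_map ?S T (\<lambda>g. tr (s C) \<otimes> g \<otimes> inv (tr C))" by (rule continuous_map_from_subtopology[OF m])
          show "(\<lambda>g. tr (s C) \<otimes> g \<otimes> inv (tr C)) \<in> topspace ?S \<rightarrow> H"
          proof
            fix g assume "g \<in> topspace ?S"
            then have gc: "g \<in> carrier G" and gs: "k g = s" using tsT by auto
            have "s C = C #> inv g" using C unfolding gs[symmetric] k_def by simp
            then show "tr (s C) \<otimes> g \<otimes> inv (tr C) \<in> H" using key[OF C gc] by simp
          qed
        qed
        from continuous_map_compose[OF this ac]
        show "continuous_map ?S U (\<lambda>g. alpha (tr (s C) \<otimes> g \<otimes> inv (tr C)))" by (simp add: o_def)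
      qed
    qed
    then show ?thesis unfolding F_def[abs_def] by simp
  qed
  have "continuous_map T (wtop R U) (\<lambda>g. F (k g) g)"
    by (rule cont_paste2[OF op ct])
  then have Phi_cont: "continuous_map T (wtop R U) \<Phi>"
  proof (rule continuous_map_eq)
    fix g assume "g \<in> topspace T"
    have "restrict (\<lambda>C. alpha (tr (k g C) \<otimes> g \<otimes> inv (tr C))) R
        = restrict (\<lambda>C. alpha (tr (C #> inv g) \<otimes> g \<otimes> inv (tr C))) R"
      by (rule restrict_ext) (simp add: k_def)
    then show "F (k g) g = \<Phi> g" by (simp add: F_def \<Phi>_def k_def)
  qed
  show ?thesis using Phi_hom Phi_cont Phi_H unfolding R_def by blast
qed

lemma univ_part:
  fixes G :: "('a, 'c) monoid_scheme" and B :: "('b, 'd) monoid_scheme" and L :: "'m monoid"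
  assumes TG: "topological_group G T" and sH: "subgroup H G" and oH: "openin T H"
    and fin: "finite (rcosets\<^bsub>G\<^esub> H)"
    and bohr: "bohr_compactification_wrt TYPE('a set set) G T B S beta"
    and KK: "K = S closure_of (beta ` H)"
    and CGL: "compact_group L U" and ah: "alpha \<in> hom (G\<lparr>carrier := H\<rparr>) L"
    and ac: "continuous_map (subtopology T H) U alpha"
  shows "\<exists>alpha'. alpha' \<in> hom (B\<lparr>carrier := K\<rparr>) L \<and> continuous_map (subtopology S K) U alpha' \<and>
            (\<forall>x\<in>H. alpha x = alpha' (beta x))"
proof -
  interpret G: group G by (rule tg_group[OF TG])
  have CGB: "compact_group B S" and bh: "beta \<in> hom G B" and bc: "continuous_map T S beta"
    and UP: "\<And>(L' :: 'a set set monoid) U' a. compact_group L' U' \<Longrightarrow> a \<in> hom G L' \<Longrightarrow> continuous_map T U' a \<Longrightarrow>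
        (\<exists>a'. a' \<in> hom B L' \<and> continuous_map S U' a' \<and> (\<forall>x \<in> carrier G. a x = a' (beta x)))"
    using bohr unfolding bohr_compactification_wrt_def by blast+
  have TGB: "topological_group B S" using CGB by (simp add: compact_group_def)
  interpret B: group B by (rule tg_group[OF TGB])
  have tsS: "topspace S = carrier B" by (rule tg_topspace[OF TGB])
  have Hs: "H \<subseteq> carrier G" by (rule subgroup.subset[OF sH])
  obtain \<Phi> where Ph: "\<Phi> \<in> hom G (wr (rcosets\<^bsub>G\<^esub> H) L)" and Pc: "continuous_map T (wtop (rcosets\<^bsub>G\<^esub> H) U) \<Phi>"
    and PH: "\<And>h. h \<in> H \<Longrightarrow> fst (\<Phi> h) H = H \<and> snd (\<Phi> h) H = alpha h"
    using induced_rep[OF TG sH oH fin CGL ah ac] by blast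
  define R where "R = rcosets\<^bsub>G\<^esub> H"
  define W where "W = wr R L"
  define WT where "WT = wtop R U"
  have finR: "finite R" unfolding R_def by (fact fin)
  have HR: "H \<in> R" unfolding R_def by (rule H_in_R[OF G.is_group sH])
  have CGW: "compact_group W WT" unfolding W_def WT_def by (rule wr_compact_group[OF CGL finR])
  have TGW: "topological_group W WT" using CGW by (simp add: compact_group_def)
  interpret W: group W by (rule tg_group[OF TGW])
  have tsW: "topspace WT = carrier W" by (rule tg_topspace[OF TGW])
  have Ph': "\<Phi> \<in> hom G W" using Ph by (simp add: W_def R_def)
  have Pc': "continuous_map T WT \<Phi>" using Pc by (simp add: WT_def R_def)
  define A0 where "A0 = WT closure_of (\<Phi> ` carrier G)"
  have sPG: "subgroup (\<Phi> ` carrier G) W"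
    by (rule group_hom.img_is_subgroup) (intro group_hom.intro group_hom_axioms.intro G.is_group W.is_group Ph')
  have sA0: "subgroup A0 W" unfolding A0_def by (rule tg_closure_subgroup[OF TGW sPG])
  have cA0: "closedin WT A0" unfolding A0_def by (rule closedin_closure_of)
  define L0 where "L0 = W\<lparr>carrier := A0\<rparr>"
  define U0 where "U0 = subtopology WT A0"
  have CG0: "compact_group L0 U0" unfolding L0_def U0_def by (rule cg_closed_subgroup[OF CGW sA0 cA0])
  have cL0: "carrier L0 = A0" by (simp add: L0_def)
  have PA0: "\<Phi> g \<in> A0" if "g \<in> carrier G" for g
  proof -
    have "\<Phi> ` carrier G \<subseteq> topspace WT" using hom_in_carrier[OF Ph'] tsW by blast
    then have "\<Phi> ` carrier G \<subseteq> A0" unfolding A0_def by (rule closure_of_subset)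
    then show ?thesis using that by blast
  qed
  have Ph0: "\<Phi> \<in> hom G L0"
    by (rule homI) (simp_all add: L0_def PA0 hom_mult[OF Ph'])
  have Pc0: "continuous_map T U0 \<Phi>"
    unfolding U0_def continuous_map_in_subtopology using Pc' PA0 tg_topspace[OF TG] by auto
  define e where "e x = {{g \<in> carrier G. \<Phi> g \<in> V} | V. openin WT V \<and> x \<in> V}" for x
  have HW: "Hausdorff_space WT" using CGW by (simp add: compact_group_def)
  have inj: "inj_on e (carrier L0)"
    unfolding cL0 A0_def e_def by (rule dense_inj[OF HW])
  let ?d = "inv_into (carrier L0) e"
  have CGt: "compact_group (tr_mon e L0) (tr_top e L0 U0)" by (rule transport(1)[OF CG0 inj])
  have eh: "e \<in> hom L0 (tr_mon e L0)" by (rule transport(2)[OF CG0 inj])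
  have dh: "?d \<in> hom (tr_mon e L0) L0" by (rule transport(3)[OF CG0 inj])
  have ec: "continuous_map U0 (tr_top e L0 U0) e" by (rule transport(4)[OF CG0 inj])
  have dc: "continuous_map (tr_top e L0 U0) U0 ?d" by (rule transport(5)[OF CG0 inj])
  have ah2: "e \<circ> \<Phi> \<in> hom G (tr_mon e L0)" by (rule hom_compose[OF Ph0 eh])
  have ac2: "continuous_map T (tr_top e L0 U0) (e \<circ> \<Phi>)" by (rule continuous_map_compose[OF Pc0 ec])
  obtain \<Psi>' where Psh': "\<Psi>' \<in> hom B (tr_mon e L0)" and Psc': "continuous_map S (tr_top e L0 U0) \<Psi>'"
    and Pseq': "\<And>x. x \<in> carrier G \<Longrightarrow> (e \<circ> \<Phi>) x = \<Psi>' (beta x)"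
    using UP[OF CGt ah2 ac2] by blast
  define \<Psi> where "\<Psi> = ?d \<circ> \<Psi>'"
  have Psh: "\<Psi> \<in> hom B L0" unfolding \<Psi>_def by (rule hom_compose[OF Psh' dh])
  have Psc0: "continuous_map S U0 \<Psi>" unfolding \<Psi>_def by (rule continuous_map_compose[OF Psc' dc])
  have Psc: "continuous_map S WT \<Psi>" using Psc0 unfolding U0_def by (rule continuous_map_into_fulltopology)
  have Pseq: "\<Psi> (beta x) = \<Phi> x" if x: "x \<in> carrier G" for x
  proof -
    have "\<Psi> (beta x) = ?d (e (\<Phi> x))" using Pseq'[OF x] by (simp add: \<Psi>_def)
    also have "\<dots> = \<Phi> x" using inv_into_f_f[OF inj] PA0[OF x] cL0 by simp
    finally show ?thesis .
  qed
  have PsW: "\<Psi> k \<in> carrier W" if "k \<in> carrier B" for k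
    using hom_in_carrier[OF Psh that] cL0 subgroup.subset[OF sA0] by blast
  have PsM: "\<Psi> (k \<otimes>\<^bsub>B\<^esub> k') = \<Psi> k \<otimes>\<^bsub>W\<^esub> \<Psi> k'" if "k \<in> carrier B" "k' \<in> carrier B" for k k'
    using hom_mult[OF Psh that] by (simp add: L0_def)
  have cfst: "continuous_map WT (discrete_topology (perms R)) fst"
    unfolding WT_def wtop_def by (rule continuous_map_fst)
  have cev: "continuous_map (discrete_topology (perms R)) (discrete_topology R) (\<lambda>s. s H)"
    using perms_mem[OF _ HR] by simp
  have cZ: "continuous_map S (discrete_topology R) (\<lambda>k. fst (\<Psi> k) H)"
    using continuous_map_compose[OF continuous_map_compose[OF Psc cfst] cev] by (simp add: o_def)
  have Zc: "closedin S {k \<in> topspace S. fst (\<Psi> k) H = H}" by (rule discrete_fibre_closed[OF cZ])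
  have bH: "beta ` H \<subseteq> {k \<in> topspace S. fst (\<Psi> k) H = H}"
  proof
    fix y assume "y \<in> beta ` H"
    then obtain h where h: "h \<in> H" "y = beta h" by (elim imageE)
    have hc: "h \<in> carrier G" using h(1) Hs by blast
    have "beta h \<in> topspace S" using hom_in_carrier[OF bh hc] tsS by simp
    moreover have "fst (\<Psi> (beta h)) H = H" using Pseq[OF hc] PH[OF h(1)] by simp
    ultimately show "y \<in> {k \<in> topspace S. fst (\<Psi> k) H = H}" using h(2) by simp
  qed
  have KZ: "K \<subseteq> {k \<in> topspace S. fst (\<Psi> k) H = H}"
    unfolding KK by (rule closure_of_minimal[OF bH Zc])
  define alpha' where "alpha' k = snd (\<Psi> k) H" for k
  have KB: "K \<subseteq> carrier B" using KZ tsS by blast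
  have a'h: "alpha' \<in> hom (B\<lparr>carrier := K\<rparr>) L"
  proof (rule homI)
    fix k assume "k \<in> carrier (B\<lparr>carrier := K\<rparr>)"
    then have k: "k \<in> carrier B" using KB by auto
    have "snd (\<Psi> k) \<in> R \<rightarrow>\<^sub>E carrier L" using PsW[OF k] by (simp add: W_def wr_carrier mem_Times_iff)
    then show "alpha' k \<in> carrier L" using HR by (auto simp: alpha'_def)
  next
    fix k k' assume "k \<in> carrier (B\<lparr>carrier := K\<rparr>)" "k' \<in> carrier (B\<lparr>carrier := K\<rparr>)"
    then have kK: "k \<in> K" and k'K: "k' \<in> K" by auto
    have k: "k \<in> carrier B" and k': "k' \<in> carrier B" using kK k'K KB by auto
    have fk': "fst (\<Psi> k') H = H" using KZ k'K by blast
    have "alpha' (k \<otimes>\<^bsub>B\<^esub> k') = snd (\<Psi> k \<otimes>\<^bsub>W\<^esub> \<Psi> k') H" by (simp add: alpha'_def PsM[OF k k'])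
    also have "\<dots> = snd (\<Psi> k) (fst (\<Psi> k') H) \<otimes>\<^bsub>L\<^esub> snd (\<Psi> k') H" by (simp add: W_def wr_mult HR)
    also have "\<dots> = alpha' k \<otimes>\<^bsub>L\<^esub> alpha' k'" by (simp add: fk' alpha'_def)
    finally show "alpha' (k \<otimes>\<^bsub>B\<lparr>carrier := K\<rparr>\<^esub> k') = alpha' k \<otimes>\<^bsub>L\<^esub> alpha' k'" by simp
  qed
  have a'c: "continuous_map (subtopology S K) U alpha'"
  proof -
    have csnd: "continuous_map WT (product_topology (\<lambda>_. U) R) snd"
      unfolding WT_def wtop_def by (rule continuous_map_snd)
    have "continuous_map S U (\<lambda>k. snd (\<Psi> k) H)"
      using continuous_map_compose[OF continuous_map_compose[OF Psc csnd] continuous_map_product_projection[OF HR, of "\<lambda>_. U"]]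
      by (simp add: o_def)
    then show ?thesis unfolding alpha'_def by (rule continuous_map_from_subtopology)
  qed
  have a'eq: "\<forall>x\<in>H. alpha x = alpha' (beta x)"
  proof
    fix h assume h: "h \<in> H"
    have hc: "h \<in> carrier G" using h Hs by blast
    show "alpha h = alpha' (beta h)" using Pseq[OF hc] PH[OF h] by (simp add: alpha'_def)
  qed
  show ?thesis using a'h a'c a'eq by blast
qed

theorem proposition2p4:
  fixes G :: "('a, 'c) monoid_scheme" and T :: "'a topology"
    and B :: "('b, 'd) monoid_scheme" and S :: "'b topology"
    and beta :: "'a \<Rightarrow> 'b" and H :: "'a set" and K :: "'b set"
  assumes "topological_group G T"
    and "subgroup H G" and "closedin T H" and "finite (rcosets\<^bsub>G\<^esub> H)"
    and "bohr_compactification_wrt TYPE('a set set) G T B S beta"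
    and "K = S closure_of (beta ` H)"
  shows "(subgroup K B \<and> finite (rcosets\<^bsub>B\<^esub> K)) \<and>
         bohr_compactification_wrt TYPE('m) (G\<lparr>carrier := H\<rparr>) (subtopology T H)
           (B\<lparr>carrier := K\<rparr>) (subtopology S K) beta \<and>
         connected_component_of (subtopology S K) \<one>\<^bsub>B\<^esub> = connected_component_of S \<one>\<^bsub>B\<^esub>"
proof -
  note TG = assms(1) and sH = assms(2) and cH = assms(3) and fin = assms(4)
    and bohr = assms(5) and KK = assms(6)
  interpret G: group G by (rule tg_group[OF TG])
  have CGB: "compact_group B S" and bh: "beta \<in> hom G B" and bc: "continuous_map T S beta"
    and dense: "S closure_of (beta ` carrier G) = topspace S"
    using bohr unfolding bohr_compactification_wrt_def by blast+
  have TGB: "topological_group B S" using CGB by (simp add: compact_group_def)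
  interpret B: group B by (rule tg_group[OF TGB])
  have tsS: "topspace S = carrier B" by (rule tg_topspace[OF TGB])
  have tsT: "topspace T = carrier G" by (rule tg_topspace[OF TG])
  have Hs: "H \<subseteq> carrier G" by (rule subgroup.subset[OF sH])
  have oH: "openin T H" by (rule tg_finite_index_open[OF TG sH cH fin])
  have GH: "group_hom G B beta"
    by (intro group_hom.intro group_hom_axioms.intro G.is_group B.is_group bh)
  have sbH: "subgroup (beta ` H) B" by (rule group_hom.subgroup_img_is_subgroup[OF GH sH])
  have sK: "subgroup K B" unfolding KK by (rule tg_closure_subgroup[OF TGB sbH])
  have cK: "closedin S K" unfolding KK by (rule closedin_closure_of)
  have bHK: "beta ` H \<subseteq> K"
  proof -
    have "beta ` H \<subseteq> topspace S" using hom_in_carrier[OF bh] Hs tsS by blast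
    then show ?thesis unfolding KK by (rule closure_of_subset)
  qed
  have KB: "K \<subseteq> carrier B" by (rule subgroup.subset[OF sK])
  define t where "t = trv G H"
  have tc: "C \<in> rcosets\<^bsub>G\<^esub> H \<Longrightarrow> t C \<in> carrier G" for C
    unfolding t_def by (rule trv_carrier[OF G.is_group sH])
  define Cl where "Cl = (\<Union>C\<in>(rcosets\<^bsub>G\<^esub> H). K #>\<^bsub>B\<^esub> beta (t C))"
  have bt: "beta (t C) \<in> carrier B" if "C \<in> rcosets\<^bsub>G\<^esub> H" for C
    by (rule hom_in_carrier[OF bh tc[OF that]])
  have cCl: "closedin S Cl"
    unfolding Cl_def
  proof (rule closedin_Union)
    show "finite ((\<lambda>C. K #>\<^bsub>B\<^esub> beta (t C)) ` (rcosets\<^bsub>G\<^esub> H))" using fin by simp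
    fix X assume "X \<in> (\<lambda>C. K #>\<^bsub>B\<^esub> beta (t C)) ` (rcosets\<^bsub>G\<^esub> H)"
    then obtain C where C: "C \<in> rcosets\<^bsub>G\<^esub> H" "X = K #>\<^bsub>B\<^esub> beta (t C)" by (elim imageE)
    show "closedin S X" unfolding C(2) by (rule tg_right_coset_closed[OF TGB cK bt[OF C(1)]])
  qed
  have bGCl: "beta ` carrier G \<subseteq> Cl"
  proof
    fix y assume "y \<in> beta ` carrier G"
    then obtain g where g: "g \<in> carrier G" "y = beta g" by (elim imageE)
    define C where "C = H #>\<^bsub>G\<^esub> g"
    have C: "C \<in> rcosets\<^bsub>G\<^esub> H" unfolding C_def by (rule G.rcosetsI[OF Hs g(1)])
    have "g \<in> C" unfolding C_def by (rule G.rcos_self[OF g(1) sH])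
    then have "g \<in> H #>\<^bsub>G\<^esub> t C" using trv_coset[OF G.is_group sH C] by (simp add: t_def)
    then obtain h where h: "h \<in> H" "g = h \<otimes>\<^bsub>G\<^esub> t C" unfolding r_coset_def by blast
    have hc: "h \<in> carrier G" using h(1) Hs by blast
    have "beta g = beta h \<otimes>\<^bsub>B\<^esub> beta (t C)" using h(2) hom_mult[OF bh hc tc[OF C]] by simp
    moreover have "beta h \<in> K" using bHK h(1) by blast
    ultimately have "beta g \<in> K #>\<^bsub>B\<^esub> beta (t C)" using B.rcosI[OF _ KB bt[OF C]] by simp
    then show "y \<in> Cl" unfolding Cl_def using C g(2) by blast
  qed
  have BCl: "carrier B \<subseteq> Cl"
  proof -
    have "S closure_of (beta ` carrier G) \<subseteq> Cl" by (rule closure_of_minimal[OF bGCl cCl])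
    then show ?thesis using dense tsS by simp
  qed
  have finK: "finite (rcosets\<^bsub>B\<^esub> K)"
  proof (rule finite_subset)
    show "rcosets\<^bsub>B\<^esub> K \<subseteq> (\<lambda>C. K #>\<^bsub>B\<^esub> beta (t C)) ` (rcosets\<^bsub>G\<^esub> H)"
    proof
      fix X assume "X \<in> rcosets\<^bsub>B\<^esub> K"
      then obtain b where b: "b \<in> carrier B" "X = K #>\<^bsub>B\<^esub> b" unfolding RCOSETS_def by blast
      then have "b \<in> Cl" using BCl by blast
      then obtain C where C: "C \<in> rcosets\<^bsub>G\<^esub> H" "b \<in> K #>\<^bsub>B\<^esub> beta (t C)" unfolding Cl_def by blast
      have "K #>\<^bsub>B\<^esub> beta (t C) = K #>\<^bsub>B\<^esub> b" by (rule B.repr_independence[OF C(2) bt[OF C(1)] sK])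
      then show "X \<in> (\<lambda>C. K #>\<^bsub>B\<^esub> beta (t C)) ` (rcosets\<^bsub>G\<^esub> H)" using C(1) b(2) by blast
    qed
    show "finite ((\<lambda>C. K #>\<^bsub>B\<^esub> beta (t C)) ` (rcosets\<^bsub>G\<^esub> H))" using fin by simp
  qed
  have oK: "openin S K" by (rule tg_finite_index_open[OF TGB sK cK finK])
  have cc: "connected_component_of (subtopology S K) \<one>\<^bsub>B\<^esub> = connected_component_of S \<one>\<^bsub>B\<^esub>"
  proof -
    have oneK: "\<one>\<^bsub>B\<^esub> \<in> K" by (rule subgroup.one_closed[OF sK])
    have one_c: "\<one>\<^bsub>B\<^esub> \<in> connected_component_of_set S \<one>\<^bsub>B\<^esub>"
      using connected_component_of_refl[of S "\<one>\<^bsub>B\<^esub>"] tsS by simp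
    have "connected_component_of_set S \<one>\<^bsub>B\<^esub> \<subseteq> K \<or> disjnt (connected_component_of_set S \<one>\<^bsub>B\<^esub>) K"
      by (rule connectedin_clopen_cases[OF connectedin_connected_component_of cK oK])
    then have "connected_component_of_set S \<one>\<^bsub>B\<^esub> \<subseteq> K"
      using one_c oneK unfolding disjnt_def by blast
    then show ?thesis by (rule connected_component_of_subtopology_eq[THEN iffD2])
  qed
  have bohrH: "bohr_compactification_wrt TYPE('m) (G\<lparr>carrier := H\<rparr>) (subtopology T H)
           (B\<lparr>carrier := K\<rparr>) (subtopology S K) beta"
    unfolding bohr_compactification_wrt_def
  proof (intro conjI allI impI)
    show "compact_group (B\<lparr>carrier := K\<rparr>) (subtopology S K)" by (rule cg_closed_subgroup[OF CGB sK cK])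
    show "beta \<in> hom (G\<lparr>carrier := H\<rparr>) (B\<lparr>carrier := K\<rparr>)"
    proof (rule homI)
      fix h assume "h \<in> carrier (G\<lparr>carrier := H\<rparr>)"
      then show "beta h \<in> carrier (B\<lparr>carrier := K\<rparr>)" using bHK by auto
    next
      fix x y assume "x \<in> carrier (G\<lparr>carrier := H\<rparr>)" "y \<in> carrier (G\<lparr>carrier := H\<rparr>)"
      then have "x \<in> carrier G" "y \<in> carrier G" using Hs by auto
      then show "beta (x \<otimes>\<^bsub>G\<lparr>carrier := H\<rparr>\<^esub> y) = beta x \<otimes>\<^bsub>B\<lparr>carrier := K\<rparr>\<^esub> beta y"
        using hom_mult[OF bh] by simp
    qed
    show "continuous_map (subtopology T H) (subtopology S K) beta"
      unfolding continuous_map_in_subtopology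
    proof
      show "continuous_map (subtopology T H) S beta" by (rule continuous_map_from_subtopology[OF bc])
      show "beta \<in> topspace (subtopology T H) \<rightarrow> K" using bHK by auto
    qed
    have "subtopology S K closure_of (beta ` H) = K \<inter> (S closure_of (K \<inter> beta ` H))"
      by (rule closure_of_subtopology)
    also have "K \<inter> beta ` H = beta ` H" using bHK by blast
    also have "K \<inter> (S closure_of (beta ` H)) = K" unfolding KK by simp
    also have "K = topspace (subtopology S K)" using KB tsS by auto
    finally show "subtopology S K closure_of (beta ` carrier (G\<lparr>carrier := H\<rparr>)) = topspace (subtopology S K)"
      by simp
  next
    fix L :: "'m monoid" and U alpha
    assume a: "compact_group L U \<and> alpha \<in> hom (G\<lparr>carrier := H\<rparr>) L \<and> continuous_map (subtopology T H) U alpha"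
    then have CGL: "compact_group L U" and ah: "alpha \<in> hom (G\<lparr>carrier := H\<rparr>) L"
      and ac: "continuous_map (subtopology T H) U alpha" by blast+
    obtain alpha' where "alpha' \<in> hom (B\<lparr>carrier := K\<rparr>) L" "continuous_map (subtopology S K) U alpha'"
      "\<forall>x\<in>H. alpha x = alpha' (beta x)"
      using univ_part[OF TG sH oH fin bohr KK CGL ah ac] by blast
    then show "\<exists>alpha'. alpha' \<in> hom (B\<lparr>carrier := K\<rparr>) L \<and> continuous_map (subtopology S K) U alpha' \<and>
        (\<forall>x\<in>carrier (G\<lparr>carrier := H\<rparr>). alpha x = alpha' (beta x))" by auto
  qed
  show ?thesis using sK finK bohrH cc by blast
qed

end
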